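(* Let $J_1>J_2>0$ and $\delta>0$. There exists $\beta_0=\beta_0(\delta)<\infty$ (possibly depending on the couplings) such that for all $\beta\ge\beta_0$, every translation-invariant, ergodic infinite-volume Gibbs measure $\mu$ at inverse temperature $\beta$ satisfies $\mathbb E_\mu([S^x_{\boldsymbol r}]^2)\ge1-\delta$ for all $\boldsymbol r\in\mathbb Z^2$. Similarly, if $J_2>J_1>0$, then for $\beta\ge\beta_0(\delta)$, $\mathbb E_\mu([S^z_{\boldsymbol r}]^2)\ge1-\delta$ for all such $\mu$ and all $\boldsymbol r$.
   Context: On $\mathbb Z^2$ the horizontal edge $\langle \boldsymbol r,\boldsymbol r+\boldsymbol e_1\rangle$ is an $x$-edge if $r_1$ is even and a $z$-edge if $r_1$ is odd; the vertical edge $\langle\boldsymbol r,\boldsymbol r+\boldsymbol e_2\rangle$ is an $x$-edge if $r_2$ is even and a $z$-edge otherwise. Spins $\mathbf S_{\boldsymbol r}=(S^x_{\boldsymbol r},S^z_{\boldsymbol r})$ are unit vectors in $\mathbb R^2$ with a priori uniform measure $\nu$ on the unit circle. The formal Hamiltonian is $-J_1\sum_{x\text{-edges}}S^x_{\boldsymbol r}S^x_{\boldsymbol r'}-J_2\sum_{z\text{-edges}}S^z_{\boldsymbol r}S^z_{\boldsymbol r'}$. Infinite-volume Gibbs measures at inverse temperature $\beta$ are defined by the DLR condition: for each finite $\Lambda$, the conditional law of the spins in $\Lambda$ given those outside has density proportional to $e^{-\beta\mathcal H_\Lambda}$ w.r.t. $\prod_{\boldsymbol r\in\Lambda}\nu$,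 $\mathcal H_\Lambda$ being the sum of the interaction terms over edges with at least one endpoint in $\Lambda$. Translation invariance means invariance under shifts by $2\boldsymbol e_1$ and $2\boldsymbol e_2$; ergodicity means triviality ($\mu$-probability 0 or 1) of events invariant under these shifts. *)

theory Defs
  imports "HOL-Probability.Probability"
begin

type_synonym site = "int \<times> int"
type_synonym spin = "real \<times> real"   (* (S^x, S^z) *)
type_synonym config = "site \<Rightarrow> spin"

definition nu :: "spin measure" where
  "nu = distr (uniform_measure lborel {0..2*pi}) borel (\<lambda>t. (cos t, sin t))"

definition Omega :: "config measure" where
  "Omega = PiM UNIV (\<lambda>_. nu)"

definition hbond :: "real \<Rightarrow> real \<Rightarrow> config \<Rightarrow> site \<Rightarrow> real" where
  "hbond J1 J2 w r = (let r' = (fst r + 1, snd r) in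
     if even (fst r) then - J1 * fst (w r) * fst (w r') else - J2 * snd (w r) * snd (w r'))"

definition vbond :: "real \<Rightarrow> real \<Rightarrow> config \<Rightarrow> site \<Rightarrow> real" where
  "vbond J1 J2 w r = (let r' = (fst r, snd r + 1) in
     if even (snd r) then - J1 * fst (w r) * fst (w r') else - J2 * snd (w r) * snd (w r'))"

text \<open>H_Lambda: sum over all edges with at least one endpoint in Lambda (edges indexed by lower endpoint).\<close>
definition H_Lam :: "real \<Rightarrow> real \<Rightarrow> site set \<Rightarrow> config \<Rightarrow> real" where
  "H_Lam J1 J2 L w =
     (\<Sum>r\<in>{r. r \<in> L \<or> (fst r + 1, snd r) \<in> L}. hbond J1 J2 w r)
   + (\<Sum>r\<in>{r. r \<in> L \<or> (fst r, snd r + 1) \<in> L}. vbond J1 J2 w r)"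

definition glue :: "site set \<Rightarrow> config \<Rightarrow> config \<Rightarrow> config" where
  "glue L s w = (\<lambda>r. if r \<in> L then s r else w r)"

definition spec :: "real \<Rightarrow> real \<Rightarrow> real \<Rightarrow> site set \<Rightarrow> config set \<Rightarrow> config \<Rightarrow> real" where
  "spec J1 J2 beta L A w =
     (\<integral>s. indicator A (glue L s w) * exp (- beta * H_Lam J1 J2 L (glue L s w)) \<partial>PiM L (\<lambda>_. nu))
     / (\<integral>s. exp (- beta * H_Lam J1 J2 L (glue L s w)) \<partial>PiM L (\<lambda>_. nu))"

definition gibbs :: "real \<Rightarrow> real \<Rightarrow> real \<Rightarrow> config measure \<Rightarrow> bool" where
  "gibbs J1 J2 beta mu \<longleftrightarrow> prob_space mu \<and> sets mu = sets Omega \<and>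
     (\<forall>L. finite L \<longrightarrow> (\<forall>A\<in>sets Omega.
        emeasure mu A = (\<integral>\<^sup>+ w. ennreal (spec J1 J2 beta L A w) \<partial>mu)))"

definition shift1 :: "config \<Rightarrow> config" where
  "shift1 w = (\<lambda>r. w (fst r + 2, snd r))"

definition shift2 :: "config \<Rightarrow> config" where
  "shift2 w = (\<lambda>r. w (fst r, snd r + 2))"

definition transl_inv :: "config measure \<Rightarrow> bool" where
  "transl_inv mu \<longleftrightarrow> distr mu Omega shift1 = mu \<and> distr mu Omega shift2 = mu"

definition ergodic :: "config measure \<Rightarrow> bool" where
  "ergodic mu \<longleftrightarrow> (\<forall>A\<in>sets Omega.
      (shift1 -` A \<inter> space Omega = A \<and> shift2 -` A \<inter> space Omega = A)
      \<longrightarrow> (emeasure mu A = 0 \<or> emeasure mu A = 1))"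

end

theory Submission imports Defs begin

lemma space_nu[simp]: "space nu = UNIV" by (simp add: nu_def)
lemma sets_nu[simp]: "sets nu = sets borel" by (simp add: nu_def)

lemma prob_nu: "prob_space nu"
  unfolding nu_def
  by (intro prob_space.prob_space_distr prob_space_uniform_measure) auto

interpretation nuP: prob_space nu by (rule prob_nu)

lemma cs_meas: "(\<lambda>t::real. (cos t, sin t)) \<in> borel_measurable borel"
  by (intro borel_measurable_continuous_onI continuous_intros)

lemma AE_nu_circle: "AE p in nu. (fst p)^2 + (snd p)^2 = 1"
proof -
  have C: "{x::real\<times>real. (fst x)\<^sup>2 + (snd x)\<^sup>2 = 1} \<in> sets borel"
    by (intro borel_closed closed_Collect_eq) (auto intro!: continuous_intros)
  have m: "(\<lambda>t::real. (cos t, sin t)) \<in> measurable (uniform_measure lborel {0..2*pi}) borel"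
    using cs_meas by (simp cong: measurable_cong_sets)
  show ?thesis unfolding nu_def
    by (subst AE_distr_iff[OF m]) (use C in auto)
qed

lemma nu_G1:
  assumes "0 < e" "e \<le> 1"
  shows "measure nu {p. cos e \<le> fst p \<and> fst p \<le> 1 \<and> \<bar>snd p\<bar> \<le> e} \<ge> e / (2*pi)"
proof -
  let ?G = "{p::real\<times>real. cos e \<le> fst p \<and> fst p \<le> 1 \<and> \<bar>snd p\<bar> \<le> e}"
  have Gm: "?G \<in> sets borel"
    by (intro borel_closed closed_Collect_conj closed_Collect_le) (auto intro!: continuous_intros)
  have m: "(\<lambda>t::real. (cos t, sin t)) \<in> measurable (uniform_measure lborel {0..2*pi}) borel"
    using cs_meas by (simp cong: measurable_cong_sets)
  have sub: "{0..e} \<subseteq> {0..2*pi} \<inter> (\<lambda>t. (cos t, sin t)) -` ?G"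
  proof
    fix t assume t: "t \<in> {0..e}"
    have "e \<le> pi" using assms pi_gt3 by linarith
    then have "cos e \<le> cos t" using t assms by (intro cos_monotone_0_pi_le) auto
    moreover have "\<bar>sin t\<bar> \<le> e" using t abs_sin_x_le_abs_x[of t] by auto
    moreover have "t \<le> 2*pi" using t assms pi_gt3 by auto
    ultimately show "t \<in> {0..2*pi} \<inter> (\<lambda>t. (cos t, sin t)) -` ?G" using t by (auto simp: cos_le_one sin_le_one)
  qed
  have pm: "(\<lambda>t. (cos t, sin t)) -` ?G \<in> sets borel"
    using measurable_sets[OF cs_meas Gm] by simp
  have "emeasure nu ?G = emeasure (uniform_measure lborel {0..2*pi}) ((\<lambda>t. (cos t, sin t)) -` ?G)"
    unfolding nu_def using Gm m by (subst emeasure_distr) auto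
  also have "\<dots> = emeasure lborel ({0..2*pi} \<inter> (\<lambda>t. (cos t, sin t)) -` ?G) / emeasure lborel {0..2*pi}"
    using pm by (subst emeasure_uniform_measure) auto
  also have "\<dots> \<ge> emeasure lborel {0..e} / emeasure lborel {0..2*pi}"
    using sub pm by (intro divide_right_mono_ennreal emeasure_mono) auto
  finally have "emeasure nu ?G \<ge> ennreal (e / (2*pi))"
    using assms by (simp add: divide_ennreal)
  then show ?thesis
    by (simp add: nuP.emeasure_eq_measure)
qed

lemma nu_G2:
  assumes "0 < e" "e \<le> 1"
  shows "measure nu {p. cos e \<le> snd p \<and> snd p \<le> 1 \<and> \<bar>fst p\<bar> \<le> e} \<ge> e / (2*pi)"
proof -
  let ?G = "{p::real\<times>real. cos e \<le> snd p \<and> snd p \<le> 1 \<and> \<bar>fst p\<bar> \<le> e}"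
  have Gm: "?G \<in> sets borel"
    by (intro borel_closed closed_Collect_conj closed_Collect_le) (auto intro!: continuous_intros)
  have m: "(\<lambda>t::real. (cos t, sin t)) \<in> measurable (uniform_measure lborel {0..2*pi}) borel"
    using cs_meas by (simp cong: measurable_cong_sets)
  have sub: "{pi/2-e..pi/2} \<subseteq> {0..2*pi} \<inter> (\<lambda>t. (cos t, sin t)) -` ?G"
  proof
    fix t assume t: "t \<in> {pi/2-e..pi/2}"
    define u where "u = pi/2 - t"
    have u: "0 \<le> u" "u \<le> e" using t by (auto simp: u_def)
    have tu: "t = pi/2 - u" by (simp add: u_def)
    have "e \<le> pi" using assms pi_gt3 by linarith
    then have "cos e \<le> cos u" using u assms by (intro cos_monotone_0_pi_le) auto
    then have "cos e \<le> sin t" by (simp add: tu sin_cos_eq)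
    moreover have "\<bar>cos t\<bar> \<le> e" using u abs_sin_x_le_abs_x[of u] by (simp add: tu cos_sin_eq)
    moreover have "t \<le> 2*pi" "0 \<le> t" using t assms pi_gt3 by auto
    ultimately show "t \<in> {0..2*pi} \<inter> (\<lambda>t. (cos t, sin t)) -` ?G" using t by (auto simp: cos_le_one sin_le_one)
  qed
  have pm: "(\<lambda>t. (cos t, sin t)) -` ?G \<in> sets borel"
    using measurable_sets[OF cs_meas Gm] by simp
  have "emeasure nu ?G = emeasure (uniform_measure lborel {0..2*pi}) ((\<lambda>t. (cos t, sin t)) -` ?G)"
    unfolding nu_def using Gm m by (subst emeasure_distr) auto
  also have "\<dots> = emeasure lborel ({0..2*pi} \<inter> (\<lambda>t. (cos t, sin t)) -` ?G) / emeasure lborel {0..2*pi}"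
    using pm by (subst emeasure_uniform_measure) auto
  also have "\<dots> \<ge> emeasure lborel {pi/2-e..pi/2} / emeasure lborel {0..2*pi}"
    using sub pm by (intro divide_right_mono_ennreal emeasure_mono) auto
  finally have "emeasure nu ?G \<ge> ennreal (e / (2*pi))"
    using assms by (simp add: divide_ennreal)
  then show ?thesis
    by (simp add: nuP.emeasure_eq_measure)
qed

lemma fst_borel[measurable]: "(fst :: real\<times>real \<Rightarrow> real) \<in> borel_measurable borel"
  by (intro borel_measurable_continuous_onI continuous_intros)
lemma snd_borel[measurable]: "(snd :: real\<times>real \<Rightarrow> real) \<in> borel_measurable borel"
  by (intro borel_measurable_continuous_onI continuous_intros)

lemma glue_comp_meas: "(\<lambda>s. glue L s w r) \<in> measurable (PiM L (\<lambda>_. nu)) borel"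
proof (cases "r \<in> L")
  case True
  then have "(\<lambda>s. s r) \<in> measurable (PiM L (\<lambda>_. nu)) nu" by (rule measurable_component_singleton)
  then show ?thesis using True by (simp add: glue_def cong: measurable_cong_sets)
qed (simp add: glue_def)

lemma glue_fst_meas[measurable]: "(\<lambda>s. fst (glue L s w r)) \<in> borel_measurable (PiM L (\<lambda>_. nu))"
  using measurable_compose[OF glue_comp_meas fst_borel] by simp
lemma glue_snd_meas[measurable]: "(\<lambda>s. snd (glue L s w r)) \<in> borel_measurable (PiM L (\<lambda>_. nu))"
  using measurable_compose[OF glue_comp_meas snd_borel] by simp

lemma H_meas[measurable]: "(\<lambda>s. H_Lam J1 J2 L (glue L s w)) \<in> borel_measurable (PiM L (\<lambda>_. nu))"
  unfolding H_Lam_def hbond_def vbond_def Let_def by measurable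

lemma glue_meas: "(\<lambda>s. glue L s w) \<in> measurable (PiM L (\<lambda>_. nu)) Omega"
  unfolding Omega_def
  by (rule measurable_PiM_single') (auto simp: glue_comp_meas cong: measurable_cong_sets)

lemma comp_Omega_meas: "(\<lambda>w. w r) \<in> measurable Omega borel"
  unfolding Omega_def using measurable_component_singleton[of r UNIV "\<lambda>_. nu"]
  by (simp cong: measurable_cong_sets)

lemma fstO[measurable]: "(\<lambda>w. fst (w r)) \<in> borel_measurable Omega"
  using measurable_compose[OF comp_Omega_meas fst_borel] by simp
lemma sndO[measurable]: "(\<lambda>w. snd (w r)) \<in> borel_measurable Omega"
  using measurable_compose[OF comp_Omega_meas snd_borel] by simp

lemma space_Omega[simp]: "space Omega = UNIV"
  by (simp add: Omega_def space_PiM)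

lemma finite_Eh: "finite L \<Longrightarrow> finite {r::site. r \<in> L \<or> (fst r + 1, snd r) \<in> L}"
  by (rule finite_subset[where B="L \<union> (\<lambda>r. (fst r - 1, snd r)) ` L"])
     (auto intro!: image_eqI[where x="(fst _ + 1, snd _)"])

lemma finite_Ev: "finite L \<Longrightarrow> finite {r::site. r \<in> L \<or> (fst r, snd r + 1) \<in> L}"
  by (rule finite_subset[where B="L \<union> (\<lambda>r. (fst r, snd r - 1)) ` L"])
     (auto intro!: image_eqI[where x="(fst _, snd _ + 1)"])

definition mb :: "config \<Rightarrow> site \<Rightarrow> real" where
  "mb w r = 1 + \<bar>fst (w r)\<bar> + \<bar>snd (w r)\<bar>"

lemma circ_le1: "(fst p)^2 + (snd p)^2 = (1::real) \<Longrightarrow> \<bar>fst p\<bar> \<le> 1 \<and> \<bar>snd p\<bar> \<le> 1"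
proof -
  assume h: "(fst p)^2 + (snd p)^2 = (1::real)"
  have "(fst p)^2 \<le> 1" using h zero_le_power2[of "snd p"] by linarith
  moreover have "(snd p)^2 \<le> 1" using h zero_le_power2[of "fst p"] by linarith
  ultimately
  show ?thesis by (simp add: abs_square_le_1)
qed

lemma glue_bd:
  assumes "\<forall>t\<in>L. (fst (s t))^2 + (snd (s t))^2 = 1"
  shows "\<bar>fst (glue L s w r)\<bar> \<le> mb w r \<and> \<bar>snd (glue L s w r)\<bar> \<le> mb w r"
  using assms circ_le1[of "s r"] by (auto simp: glue_def mb_def)

lemma prod_bd:
  fixes J x y a b :: real
  assumes "\<bar>x\<bar> \<le> a" "\<bar>y\<bar> \<le> b" "\<bar>J\<bar> \<le> C"
  shows "\<bar>J * x * y\<bar> \<le> C * a * b"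
proof -
  have "\<bar>J * x * y\<bar> = \<bar>J\<bar> * (\<bar>x\<bar> * \<bar>y\<bar>)" by (simp add: abs_mult)
  also have "\<dots> \<le> C * (a * b)"
    using assms by (intro mult_mono) (auto intro: mult_mono order.trans[OF abs_ge_zero])
  finally show ?thesis by simp
qed

definition KB :: "real \<Rightarrow> real \<Rightarrow> site set \<Rightarrow> config \<Rightarrow> real" where
  "KB J1 J2 L w =
     (\<Sum>r\<in>{r. r \<in> L \<or> (fst r + 1, snd r) \<in> L}. (\<bar>J1\<bar>+\<bar>J2\<bar>) * mb w r * mb w (fst r + 1, snd r))
   + (\<Sum>r\<in>{r. r \<in> L \<or> (fst r, snd r + 1) \<in> L}. (\<bar>J1\<bar>+\<bar>J2\<bar>) * mb w r * mb w (fst r, snd r + 1))"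

lemma H_bd:
  assumes "\<forall>t\<in>L. (fst (s t))^2 + (snd (s t))^2 = 1"
  shows "\<bar>H_Lam J1 J2 L (glue L s w)\<bar> \<le> KB J1 J2 L w"
proof -
  let ?v = "glue L s w"
  have hb: "\<bar>hbond J1 J2 ?v r\<bar> \<le> (\<bar>J1\<bar>+\<bar>J2\<bar>) * mb w r * mb w (fst r + 1, snd r)" for r
    using glue_bd[OF assms, of w r] glue_bd[OF assms, of w "(fst r + 1, snd r)"]
    unfolding hbond_def Let_def by (auto intro!: prod_bd)
  have vb: "\<bar>vbond J1 J2 ?v r\<bar> \<le> (\<bar>J1\<bar>+\<bar>J2\<bar>) * mb w r * mb w (fst r, snd r + 1)" for r
    using glue_bd[OF assms, of w r] glue_bd[OF assms, of w "(fst r, snd r + 1)"]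
    unfolding vbond_def Let_def by (auto intro!: prod_bd)
  have "\<bar>H_Lam J1 J2 L ?v\<bar> \<le> \<bar>\<Sum>r\<in>{r. r \<in> L \<or> (fst r + 1, snd r) \<in> L}. hbond J1 J2 ?v r\<bar>
      + \<bar>\<Sum>r\<in>{r. r \<in> L \<or> (fst r, snd r + 1) \<in> L}. vbond J1 J2 ?v r\<bar>"
    unfolding H_Lam_def by (rule abs_triangle_ineq)
  also have "\<dots> \<le> KB J1 J2 L w"
    unfolding KB_def
    by (intro add_mono order.trans[OF sum_abs] sum_mono hb vb)
  finally show ?thesis .
qed

lemma prob_PiL: "prob_space (PiM L (\<lambda>_. nu))"
  by (intro prob_space_PiM prob_nu)

lemma AE_circ_Pi:
  assumes "finite L"
  shows "AE s in PiM L (\<lambda>_. nu). \<forall>t\<in>L. (fst (s t))^2 + (snd (s t))^2 = 1"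
proof -
  have "\<forall>t\<in>L. AE s in PiM L (\<lambda>_. nu). (fst (s t))^2 + (snd (s t))^2 = 1"
    using AE_PiM_component[where M="\<lambda>_. nu" and I=L and P="\<lambda>p. (fst p)^2 + (snd p)^2 = 1"]
      prob_nu AE_nu_circle by blast
  then show ?thesis
    using assms by (subst AE_ball_countable) (auto intro: countable_finite)
qed

lemma integ_F:
  assumes "finite L"
  shows "integrable (PiM L (\<lambda>_. nu)) (\<lambda>s. exp (- beta * H_Lam J1 J2 L (glue L s w)))"
proof -
  interpret P: prob_space "PiM L (\<lambda>_. nu)" by (rule prob_PiL)
  show ?thesis
  proof (rule P.integrable_const_bound[where B="exp (\<bar>beta\<bar> * KB J1 J2 L w)"])
    show "AE s in PiM L (\<lambda>_. nu). norm (exp (- beta * H_Lam J1 J2 L (glue L s w))) \<le> exp (\<bar>beta\<bar> * KB J1 J2 L w)"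
      using AE_circ_Pi[OF assms]
    proof eventually_elim
      case (elim s)
      have h: "\<bar>H_Lam J1 J2 L (glue L s w)\<bar> \<le> KB J1 J2 L w" by (rule H_bd[OF elim])
      have "- beta * H_Lam J1 J2 L (glue L s w) \<le> \<bar>beta\<bar> * \<bar>H_Lam J1 J2 L (glue L s w)\<bar>"
        by (metis abs_ge_self abs_minus_cancel abs_mult mult_minus_left)
      also have "\<dots> \<le> \<bar>beta\<bar> * KB J1 J2 L w" by (rule mult_left_mono[OF h]) simp
      finally show ?case by simp
    qed
  qed measurable
qed

lemma D_lower:
  assumes "finite L"
  shows "exp (- \<bar>beta\<bar> * KB J1 J2 L w) \<le> (\<integral>s. exp (- beta * H_Lam J1 J2 L (glue L s w)) \<partial>PiM L (\<lambda>_. nu))"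
proof -
  interpret P: prob_space "PiM L (\<lambda>_. nu)" by (rule prob_PiL)
  have "(\<integral>s. exp (- \<bar>beta\<bar> * KB J1 J2 L w) \<partial>PiM L (\<lambda>_. nu)) \<le> (\<integral>s. exp (- beta * H_Lam J1 J2 L (glue L s w)) \<partial>PiM L (\<lambda>_. nu))"
  proof (rule integral_mono_AE[OF _ integ_F[OF assms]])
    show "AE s in PiM L (\<lambda>_. nu). exp (- \<bar>beta\<bar> * KB J1 J2 L w) \<le> exp (- beta * H_Lam J1 J2 L (glue L s w))"
      using AE_circ_Pi[OF assms]
    proof eventually_elim
      case (elim s)
      have h: "\<bar>H_Lam J1 J2 L (glue L s w)\<bar> \<le> KB J1 J2 L w" by (rule H_bd[OF elim])
      have "beta * H_Lam J1 J2 L (glue L s w) \<le> \<bar>beta\<bar> * \<bar>H_Lam J1 J2 L (glue L s w)\<bar>"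
        by (metis abs_ge_self abs_mult)
      also have "\<dots> \<le> \<bar>beta\<bar> * KB J1 J2 L w" by (rule mult_left_mono[OF h]) simp
      finally show ?case by simp
    qed
  qed simp
  then show ?thesis by (simp add: P.prob_space)
qed

lemma D_pos:
  assumes "finite L"
  shows "0 < (\<integral>s. exp (- beta * H_Lam J1 J2 L (glue L s w)) \<partial>PiM L (\<lambda>_. nu))"
  using D_lower[OF assms, of beta J1 J2 w] by (meson exp_gt_zero less_le_trans)

lemma indic_glue_meas:
  assumes "A \<in> sets Omega"
  shows "(\<lambda>s. indicator A (glue L s w) :: real) \<in> borel_measurable (PiM L (\<lambda>_. nu))"
  by (rule measurable_compose[OF glue_meas borel_measurable_indicator[OF assms]])


lemma gibbs_circle:
  assumes g: "gibbs J1 J2 beta mu"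
  shows "AE w in mu. (fst (w r))^2 + (snd (w r))^2 = 1"
proof -
  have ps: "prob_space mu" and sm: "sets mu = sets Omega"
    and dlr: "\<And>L A. finite L \<Longrightarrow> A \<in> sets Omega \<Longrightarrow>
        emeasure mu A = (\<integral>\<^sup>+ w. ennreal (spec J1 J2 beta L A w) \<partial>mu)"
    using g unfolding gibbs_def by auto
  interpret M: prob_space mu by (rule ps)
  define A where "A = {w::config. (fst (w r))^2 + (snd (w r))^2 = 1}"
  have Am: "A \<in> sets Omega"
  proof -
    have "{w \<in> space Omega. (fst (w r))^2 + (snd (w r))^2 = 1} \<in> sets Omega" by measurable
    then show ?thesis by (simp add: A_def)
  qed
  have sp: "spec J1 J2 beta {r} A w = 1" for w
  proof -
    let ?P = "PiM {r} (\<lambda>_. nu)"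
    let ?F = "\<lambda>s. exp (- beta * H_Lam J1 J2 {r} (glue {r} s w))"
    have "(\<integral>s. indicator A (glue {r} s w) * ?F s \<partial>?P) = (\<integral>s. ?F s \<partial>?P)"
    proof (rule integral_cong_AE)
      show "(\<lambda>s. indicator A (glue {r} s w) * ?F s) \<in> borel_measurable ?P"
        using indic_glue_meas[OF Am, of "{r}" w] by measurable
      show "AE s in ?P. indicator A (glue {r} s w) * ?F s = ?F s"
      proof -
        have "AE s in ?P. \<forall>t\<in>{r}. (fst (s t))^2 + (snd (s t))^2 = 1" by (rule AE_circ_Pi) simp
        then show ?thesis by eventually_elim (auto simp: A_def glue_def)
      qed
    qed measurable
    then show ?thesis
      unfolding spec_def using D_pos[of "{r}" beta J1 J2 w] by simp
  qed
  have "emeasure mu A = (\<integral>\<^sup>+ w. ennreal 1 \<partial>mu)"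
    using dlr[of "{r}" A] Am sp by simp
  also have "\<dots> = 1" using M.emeasure_space_1 by simp
  finally have "M.prob A = 1" by (simp add: M.emeasure_eq_measure)
  then have "AE w in mu. w \<in> A" by (rule M.AE_prob_1)
  then show ?thesis by (simp add: A_def)
qed

lemma spec_bound:
  fixes G :: "spin set" and A :: "config set"
  assumes L: "finite L" and b: "0 \<le> beta" and G: "G \<in> sets borel"
    and q: "0 < q" "q \<le> measure nu G"
    and bad: "\<And>s. (\<forall>t\<in>L. (fst (s t))^2 + (snd (s t))^2 = 1) \<Longrightarrow> glue L s w \<in> A \<Longrightarrow>
                 Lb \<le> H_Lam J1 J2 L (glue L s w)"
    and good: "\<And>s. (\<forall>t\<in>L. s t \<in> G) \<Longrightarrow> H_Lam J1 J2 L (glue L s w) \<le> Ug"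
  shows "spec J1 J2 beta L A w \<le> exp (- beta * Lb) / (exp (- beta * Ug) * q ^ card L)"
proof -
  let ?P = "PiM L (\<lambda>_. nu)"
  let ?F = "\<lambda>s. exp (- beta * H_Lam J1 J2 L (glue L s w))"
  interpret P: prob_space ?P by (rule prob_PiL)
  interpret PS: product_sigma_finite "\<lambda>_::site. nu"
    by (simp add: product_sigma_finite_def prob_space_imp_sigma_finite prob_nu)
  have N: "(\<integral>s. indicator A (glue L s w) * ?F s \<partial>?P) \<le> exp (- beta * Lb)"
  proof (cases "integrable ?P (\<lambda>s. indicator A (glue L s w) * ?F s)")
    case True
    have "(\<integral>s. indicator A (glue L s w) * ?F s \<partial>?P) \<le> (\<integral>s. exp (- beta * Lb) \<partial>?P)"
    proof (rule integral_mono_AE[OF True])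
      show "AE s in ?P. indicator A (glue L s w) * ?F s \<le> exp (- beta * Lb)"
        using AE_circ_Pi[OF L]
      proof eventually_elim
        case (elim s)
        show ?case
        proof (cases "glue L s w \<in> A")
          case True
          have "beta * Lb \<le> beta * H_Lam J1 J2 L (glue L s w)"
            by (rule mult_left_mono[OF bad[OF elim True] b])
          then show ?thesis using True by simp
        qed simp
      qed
    qed simp
    then show ?thesis by (simp add: P.prob_space)
  next
    case False
    then show ?thesis by (simp add: not_integrable_integral_eq)
  qed
  define S where "S = PiE L (\<lambda>_. G)"
  have Sm: "S \<in> sets ?P" unfolding S_def using L G by (intro sets_PiM_I_finite) auto
  have "emeasure ?P S = (\<Prod>i\<in>L. emeasure nu G)"
    unfolding S_def using L G by (subst PS.emeasure_PiM) auto
  then have "ennreal (measure ?P S) = ennreal ((measure nu G) ^ card L)"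
    by (simp add: P.emeasure_eq_measure nuP.emeasure_eq_measure prod_ennreal ennreal_power)
  then have mS: "measure ?P S = (measure nu G) ^ card L"
    by (simp add: ennreal_inj)
  have qS: "q ^ card L \<le> measure ?P S"
    unfolding mS using q by (intro power_mono) auto
  have "(\<integral>s. exp (- beta * Ug) * indicator S s \<partial>?P) \<le> (\<integral>s. ?F s \<partial>?P)"
  proof (rule integral_mono[OF _ integ_F[OF L]])
    show "integrable ?P (\<lambda>s. exp (- beta * Ug) * indicator S s)"
      using Sm by (intro integrable_mult_right integrable_real_indicator) (auto simp: less_top[symmetric] P.emeasure_finite)
    fix s assume "s \<in> space ?P"
    show "exp (- beta * Ug) * indicator S s \<le> ?F s"
    proof (cases "s \<in> S")
      case True
      then have "\<forall>t\<in>L. s t \<in> G" by (auto simp: S_def)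
      then have "beta * H_Lam J1 J2 L (glue L s w) \<le> beta * Ug"
        by (intro mult_left_mono[OF good b])
      then show ?thesis using True by simp
    qed simp
  qed
  then have D: "exp (- beta * Ug) * q ^ card L \<le> (\<integral>s. ?F s \<partial>?P)"
    using Sm qS by (simp add: order.trans[OF mult_left_mono[OF qS]])
  have pos: "0 < exp (- beta * Ug) * q ^ card L" using q by simp
  have "spec J1 J2 beta L A w = (\<integral>s. indicator A (glue L s w) * ?F s \<partial>?P) / (\<integral>s. ?F s \<partial>?P)"
    by (simp add: spec_def)
  also have "\<dots> \<le> exp (- beta * Lb) / (\<integral>s. ?F s \<partial>?P)"
    using N D pos by (intro divide_right_mono) auto
  also have "\<dots> \<le> exp (- beta * Lb) / (exp (- beta * Ug) * q ^ card L)"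
    using D pos by (intro divide_left_mono) auto
  finally show ?thesis .
qed

lemma amgm: "0 \<le> (J::real) \<Longrightarrow> -(J*x^2/2 + J*y^2/2) \<le> - J * x * y"
proof -
  assume J: "0 \<le> J"
  have "0 \<le> J*(x-y)^2" using J by simp
  moreover have "J*(x-y)^2 = J*x^2 - 2*(J*x*y) + J*y^2" by (simp add: power2_diff algebra_simps)
  ultimately show ?thesis by simp
qed

lemma row_lower:
  fixes X Z :: "nat \<Rightarrow> real"
  assumes J: "0 \<le> J1" "0 \<le> J2" and b0: "(Z 0)^2 \<le> 1" and b1: "(Z (Suc (2*n)))^2 \<le> 1"
  shows "-(\<Sum>i<2*n. (J1*(X (Suc i))^2 + J2*(Z (Suc i))^2)/2) - J2
         \<le> (\<Sum>i<Suc(2*n). (if odd i then - J1 * X i * X (Suc i) else - J2 * Z i * Z (Suc i)))"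
proof -
  define a where "a i = (if odd i then J1*(X i)^2/2 else J2*(Z i)^2/2)" for i
  define b where "b i = (if odd i then J1*(X (Suc i))^2/2 else J2*(Z (Suc i))^2/2)" for i
  have e: "-(a i + b i) \<le> (if odd i then - J1 * X i * X (Suc i) else - J2 * Z i * Z (Suc i))" for i
  proof (cases "odd i")
    case True then show ?thesis using amgm[OF J(1), of "X i" "X (Suc i)"] by (simp add: a_def b_def)
  next
    case False then show ?thesis using amgm[OF J(2), of "Z i" "Z (Suc i)"] by (simp add: a_def b_def)
  qed
  have ab: "a (Suc i) + b i = (J1*(X (Suc i))^2 + J2*(Z (Suc i))^2)/2" for i
    by (cases "odd i") (auto simp: a_def b_def)
  have s1: "(\<Sum>i<Suc(2*n). a i) = a 0 + (\<Sum>i<2*n. a (Suc i))" by (rule sum.lessThan_Suc_shift)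
  have s2: "(\<Sum>i<Suc(2*n). b i) = (\<Sum>i<2*n. b i) + b (2*n)" by (rule sum.lessThan_Suc)
  have "(\<Sum>i<Suc(2*n). (a i + b i)) = a 0 + (\<Sum>i<2*n. a (Suc i)) + ((\<Sum>i<2*n. b i) + b (2*n))"
    by (simp only: sum.distrib s1 s2)
  also have "\<dots> = a 0 + b (2*n) + (\<Sum>i<2*n. (J1*(X (Suc i))^2 + J2*(Z (Suc i))^2)/2)"
    by (simp add: ab sum.distrib[symmetric])
  also have "\<dots> \<le> J2 + (\<Sum>i<2*n. (J1*(X (Suc i))^2 + J2*(Z (Suc i))^2)/2)"
  proof -
    have "a 0 \<le> J2/2" using mult_left_mono[OF b0 J(2)] by (simp add: a_def)
    moreover have "b (2*n) \<le> J2/2" using mult_left_mono[OF b1 J(2)] by (simp add: b_def)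
    ultimately show ?thesis by simp
  qed
  finally have "(\<Sum>i<Suc(2*n). (a i + b i)) \<le> J2 + (\<Sum>i<2*n. (J1*(X (Suc i))^2 + J2*(Z (Suc i))^2)/2)" .
  moreover have "-(\<Sum>i<Suc(2*n). (a i + b i)) \<le> (\<Sum>i<Suc(2*n). (if odd i then - J1 * X i * X (Suc i) else - J2 * Z i * Z (Suc i)))"
  proof -
    have "(\<Sum>i<Suc(2*n). -(a i + b i)) \<le> (\<Sum>i<Suc(2*n). (if odd i then - J1 * X i * X (Suc i) else - J2 * Z i * Z (Suc i)))"
      by (rule sum_mono) (rule e)
    then show ?thesis by (simp only: sum_negf)
  qed
  ultimately show ?thesis by linarith
qed

lemma sum_alt: "(\<Sum>i<Suc(2*n). (if odd i then A else B)) = real n * A + (real n + 1) * (B::real)"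
  by (induct n) (auto simp: algebra_simps)

lemma sum_ends:
  assumes "1 \<le> n"
  shows "(\<Sum>i<Suc(2*n). (if i = 0 \<or> i = 2*n then D else 0)) = 2 * (D::real)"
proof -
  have "(\<Sum>i<Suc(2*n). (if i = 0 \<or> i = 2*n then D else 0)) = (\<Sum>i\<in>{0, 2*n}. D)"
    by (rule sum.mono_neutral_cong_right) (use assms in auto)
  also have "\<dots> = 2 * D" using assms by simp
  finally show ?thesis .
qed

lemma row_upper:
  fixes e :: "nat \<Rightarrow> real"
  assumes n: "1 \<le> n"
    and h: "\<And>i. i < Suc(2*n) \<Longrightarrow> e i \<le> (if i = 0 \<or> i = 2*n then C else if odd i then A else B)"
  shows "(\<Sum>i<Suc(2*n). e i) \<le> real n * A + (real n - 1) * B + 2 * C"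
proof -
  have "(\<Sum>i<Suc(2*n). e i) \<le> (\<Sum>i<Suc(2*n). (if odd i then A else B) + (if i = 0 \<or> i = 2*n then C - B else 0))"
  proof (rule sum_mono)
    fix i assume "i \<in> {..<Suc(2*n)}"
    then have "e i \<le> (if i = 0 \<or> i = 2*n then C else if odd i then A else B)" using h by auto
    moreover have "i = 0 \<or> i = 2*n \<Longrightarrow> even i" by auto
    ultimately show "e i \<le> (if odd i then A else B) + (if i = 0 \<or> i = 2*n then C - B else 0)"
      by (auto split: if_splits)
  qed
  also have "\<dots> = real n * A + (real n + 1) * B + 2 * (C - B)"
    by (simp only: sum.distrib sum_alt sum_ends[OF n])
  finally show ?thesis by (simp add: algebra_simps)
qed

definition box :: "nat \<Rightarrow> site set" where
  "box n = {r. 0 \<le> fst r \<and> fst r < 2 * int n \<and> 0 \<le> snd r \<and> snd r < 2 * int n}"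

lemma finite_box: "finite (box n)"
  by (rule finite_subset[where B="{0..<2*int n} \<times> {0..<2*int n}"]) (auto simp: box_def)

lemma Eh_box: "{r::site. r \<in> box n \<or> (fst r + 1, snd r) \<in> box n}
   = (\<lambda>(i,y). (int i - 1, int y)) ` ({..<Suc(2*n)} \<times> {..<2*n})"
proof (intro equalityI subsetI)
  fix r :: site assume "r \<in> {r::site. r \<in> box n \<or> (fst r + 1, snd r) \<in> box n}"
  then have h: "-1 \<le> fst r" "fst r < 2*int n" "0 \<le> snd r" "snd r < 2*int n" by (auto simp: box_def)
  show "r \<in> (\<lambda>(i,y). (int i - 1, int y)) ` ({..<Suc(2*n)} \<times> {..<2*n})"
    by (rule image_eqI[where x="(nat (fst r + 1), nat (snd r))"]) (use h in auto)
qed (auto simp: box_def)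

lemma Ev_box: "{r::site. r \<in> box n \<or> (fst r, snd r + 1) \<in> box n}
   = (\<lambda>(x,j). (int x, int j - 1)) ` ({..<2*n} \<times> {..<Suc(2*n)})"
proof (intro equalityI subsetI)
  fix r :: site assume "r \<in> {r::site. r \<in> box n \<or> (fst r, snd r + 1) \<in> box n}"
  then have h: "0 \<le> fst r" "fst r < 2*int n" "-1 \<le> snd r" "snd r < 2*int n" by (auto simp: box_def)
  show "r \<in> (\<lambda>(x,j). (int x, int j - 1)) ` ({..<2*n} \<times> {..<Suc(2*n)})"
    by (rule image_eqI[where x="(nat (fst r), nat (snd r + 1))"]) (use h in auto)
qed (auto simp: box_def)

lemma box_img: "box n = (\<lambda>(i,y). (int i, int y)) ` ({..<2*n} \<times> {..<2*n})"
proof (intro equalityI subsetI)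
  fix r :: site assume "r \<in> box n"
  then have h: "0 \<le> fst r" "fst r < 2*int n" "0 \<le> snd r" "snd r < 2*int n" by (auto simp: box_def)
  show "r \<in> (\<lambda>(i,y). (int i, int y)) ` ({..<2*n} \<times> {..<2*n})"
    by (rule image_eqI[where x="(nat (fst r), nat (snd r))"]) (use h in auto)
qed (auto simp: box_def)

lemma box_sum: "(\<Sum>r\<in>box n. g r) = (\<Sum>y<2*n. \<Sum>i<2*n. g (int i, int y))"
proof -
  have "(\<Sum>r\<in>box n. g r) = (\<Sum>p\<in>{..<2*n} \<times> {..<2*n}. g ((\<lambda>(i,y). (int i, int y)) p))"
    unfolding box_img by (subst sum.reindex) (auto simp: inj_on_def comp_def)
  also have "\<dots> = (\<Sum>i<2*n. \<Sum>y<2*n. g (int i, int y))"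
    by (simp add: sum.cartesian_product split_def)
  also have "\<dots> = (\<Sum>y<2*n. \<Sum>i<2*n. g (int i, int y))" by (rule sum.swap)
  finally show ?thesis .
qed

lemma H_box: "H_Lam J1 J2 (box n) v =
   (\<Sum>y<2*n. \<Sum>i<Suc(2*n). hbond J1 J2 v (int i - 1, int y))
 + (\<Sum>x<2*n. \<Sum>j<Suc(2*n). vbond J1 J2 v (int x, int j - 1))"
proof -
  have 1: "(\<Sum>r\<in>{r::site. r \<in> box n \<or> (fst r + 1, snd r) \<in> box n}. hbond J1 J2 v r)
      = (\<Sum>y<2*n. \<Sum>i<Suc(2*n). hbond J1 J2 v (int i - 1, int y))"
  proof -
    have "(\<Sum>r\<in>{r::site. r \<in> box n \<or> (fst r + 1, snd r) \<in> box n}. hbond J1 J2 v r)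
       = (\<Sum>p\<in>{..<Suc(2*n)} \<times> {..<2*n}. hbond J1 J2 v ((\<lambda>(i,y). (int i - 1, int y)) p))"
      unfolding Eh_box by (subst sum.reindex) (auto simp: inj_on_def comp_def)
    also have "\<dots> = (\<Sum>i<Suc(2*n). \<Sum>y<2*n. hbond J1 J2 v (int i - 1, int y))"
      by (simp add: sum.cartesian_product split_def)
    also have "\<dots> = (\<Sum>y<2*n. \<Sum>i<Suc(2*n). hbond J1 J2 v (int i - 1, int y))" by (rule sum.swap)
    finally show ?thesis .
  qed
  have 2: "(\<Sum>r\<in>{r::site. r \<in> box n \<or> (fst r, snd r + 1) \<in> box n}. vbond J1 J2 v r)
      = (\<Sum>x<2*n. \<Sum>j<Suc(2*n). vbond J1 J2 v (int x, int j - 1))"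
  proof -
    have "(\<Sum>r\<in>{r::site. r \<in> box n \<or> (fst r, snd r + 1) \<in> box n}. vbond J1 J2 v r)
       = (\<Sum>p\<in>{..<2*n} \<times> {..<Suc(2*n)}. vbond J1 J2 v ((\<lambda>(x,j). (int x, int j - 1)) p))"
      unfolding Ev_box by (subst sum.reindex) (auto simp: inj_on_def comp_def)
    also have "\<dots> = (\<Sum>x<2*n. \<Sum>j<Suc(2*n). vbond J1 J2 v (int x, int j - 1))"
      unfolding sum.cartesian_product by (rule sum.cong) (auto simp del: sum.lessThan_Suc)
    finally show ?thesis .
  qed
  show ?thesis unfolding H_Lam_def 1 2 ..
qed

lemma hb_row: "hbond J1 J2 v (int i - 1, y) =
  (if odd i then - J1 * fst (v (int i - 1, y)) * fst (v (int i, y))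
   else - J2 * snd (v (int i - 1, y)) * snd (v (int i, y)))"
  unfolding hbond_def Let_def by simp

lemma vb_row: "vbond J1 J2 v (x, int j - 1) =
  (if odd j then - J1 * fst (v (x, int j - 1)) * fst (v (x, int j))
   else - J2 * snd (v (x, int j - 1)) * snd (v (x, int j)))"
  unfolding vbond_def Let_def by simp

lemma int_Suc_m1: "int (Suc i) - 1 = int i" by simp

lemma H_box_lower:
  assumes J: "0 \<le> J1" "0 \<le> J2" and ext: "\<And>r. r \<notin> box n \<Longrightarrow> (snd (v r))^2 \<le> 1"
  shows "-(\<Sum>r\<in>box n. J1*(fst (v r))^2 + J2*(snd (v r))^2) - 4 * real n * J2 \<le> H_Lam J1 J2 (box n) v"
proof -
  define q where "q r = J1*(fst (v r))^2 + J2*(snd (v r))^2" for r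
  have rh: "-(\<Sum>i<2*n. q (int i, int y)/2) - J2 \<le> (\<Sum>i<Suc(2*n). hbond J1 J2 v (int i - 1, int y))" for y
  proof -
    have e0: "(snd (v (-1, int y)))^2 \<le> 1" by (rule ext) (auto simp: box_def)
    have e1: "(snd (v (2 * int n, int y)))^2 \<le> 1" by (rule ext) (auto simp: box_def)
    show ?thesis
      using row_lower[OF J, of "\<lambda>i. snd (v (int i - 1, int y))" n "\<lambda>i. fst (v (int i - 1, int y))"] e0 e1
      unfolding hb_row int_Suc_m1 q_def by (simp add: add_divide_distrib del: of_nat_Suc)
  qed
  have rv: "-(\<Sum>j<2*n. q (int x, int j)/2) - J2 \<le> (\<Sum>j<Suc(2*n). vbond J1 J2 v (int x, int j - 1))" for x
  proof -
    have e0: "(snd (v (int x, -1)))^2 \<le> 1" by (rule ext) (auto simp: box_def)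
    have e1: "(snd (v (int x, 2 * int n)))^2 \<le> 1" by (rule ext) (auto simp: box_def)
    show ?thesis
      using row_lower[OF J, of "\<lambda>j. snd (v (int x, int j - 1))" n "\<lambda>j. fst (v (int x, int j - 1))"] e0 e1
      unfolding vb_row int_Suc_m1 q_def by (simp add: add_divide_distrib del: of_nat_Suc)
  qed
  have Q1: "(\<Sum>r\<in>box n. q r) = (\<Sum>y<2*n. \<Sum>i<2*n. q (int i, int y))" by (rule box_sum)
  have Q2: "(\<Sum>r\<in>box n. q r) = (\<Sum>x<2*n. \<Sum>j<2*n. q (int x, int j))"
    unfolding Q1 by (rule sum.swap)
  have "(\<Sum>y<2*n. (-(\<Sum>i<2*n. q (int i, int y)/2) - J2)) \<le> (\<Sum>y<2*n. \<Sum>i<Suc(2*n). hbond J1 J2 v (int i - 1, int y))"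
    by (rule sum_mono) (rule rh)
  moreover have "(\<Sum>y<2*n. (-(\<Sum>i<2*n. q (int i, int y)/2) - J2)) = -(\<Sum>r\<in>box n. q r)/2 - 2 * real n * J2"
    unfolding Q1 by (simp add: sum_subtractf sum_negf sum_divide_distrib[symmetric])
  moreover have "(\<Sum>x<2*n. (-(\<Sum>j<2*n. q (int x, int j)/2) - J2)) \<le> (\<Sum>x<2*n. \<Sum>j<Suc(2*n). vbond J1 J2 v (int x, int j - 1))"
    by (rule sum_mono) (rule rv)
  moreover have "(\<Sum>x<2*n. (-(\<Sum>j<2*n. q (int x, int j)/2) - J2)) = -(\<Sum>r\<in>box n. q r)/2 - 2 * real n * J2"
    unfolding Q2 by (simp add: sum_subtractf sum_negf sum_divide_distrib[symmetric])
  ultimately show ?thesis unfolding H_box q_def[symmetric] by linarith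
qed

lemma H_box_upper:
  assumes n: "1 \<le> n"
    and he: "\<And>i y. i < Suc(2*n) \<Longrightarrow> y < 2*n \<Longrightarrow> hbond J1 J2 v (int i - 1, int y) \<le> (if i = 0 \<or> i = 2*n then C else if odd i then A else B)"
    and ve: "\<And>j x. j < Suc(2*n) \<Longrightarrow> x < 2*n \<Longrightarrow> vbond J1 J2 v (int x, int j - 1) \<le> (if j = 0 \<or> j = 2*n then C else if odd j then A else B)"
  shows "H_Lam J1 J2 (box n) v \<le> 4 * real n * (real n * A + (real n - 1) * B + 2 * C)"
proof -
  have rh: "(\<Sum>i<Suc(2*n). hbond J1 J2 v (int i - 1, int y)) \<le> real n * A + (real n - 1) * B + 2 * C"
    if "y < 2*n" for y by (rule row_upper[OF n]) (rule he, assumption, rule that)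
  have rv: "(\<Sum>j<Suc(2*n). vbond J1 J2 v (int x, int j - 1)) \<le> real n * A + (real n - 1) * B + 2 * C"
    if "x < 2*n" for x by (rule row_upper[OF n]) (rule ve, assumption, rule that)
  have "(\<Sum>y<2*n. \<Sum>i<Suc(2*n). hbond J1 J2 v (int i - 1, int y)) \<le> (\<Sum>y<2*n. real n * A + (real n - 1) * B + 2 * C)"
    by (rule sum_mono) (rule rh, simp)
  moreover have "(\<Sum>x<2*n. \<Sum>j<Suc(2*n). vbond J1 J2 v (int x, int j - 1)) \<le> (\<Sum>x<2*n. real n * A + (real n - 1) * B + 2 * C)"
    by (rule sum_mono) (rule rv, simp)
  ultimately show ?thesis unfolding H_box by (simp add: algebra_simps)
qed

lemma edge1:
  fixes p q :: spin
  assumes J: "0 \<le> J1" "0 \<le> J2" and eta: "0 \<le> eta" "eta \<le> 1" and c: "0 \<le> c" "1 - eta^2 \<le> c * c"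
    and i: "i < Suc(2*n)"
    and gp: "1 \<le> i \<Longrightarrow> c \<le> fst p \<and> \<bar>snd p\<bar> \<le> eta"
    and gq: "i < 2*n \<Longrightarrow> c \<le> fst q \<and> \<bar>snd q\<bar> \<le> eta"
    and bp: "\<bar>snd p\<bar> \<le> 1" and bq: "\<bar>snd q\<bar> \<le> 1"
  shows "(if odd i then - J1 * fst p * fst q else - J2 * snd p * snd q)
    \<le> (if i = 0 \<or> i = 2*n then J2 else if odd i then - J1 * (1 - eta^2) else J2 * eta)"
proof (cases "i = 0 \<or> i = 2*n")
  case True
  then have "even i" by auto
  moreover have "\<bar>- J2 * snd p * snd q\<bar> \<le> J2 * 1 * 1" using bp bq J by (intro prod_bd) auto
  ultimately show ?thesis using True by auto
next
  case False
  then have i1: "1 \<le> i" "i < 2*n" using i by auto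
  show ?thesis
  proof (cases "odd i")
    case True
    have "c * c \<le> fst p * fst q" using gp[OF i1(1)] gq[OF i1(2)] c by (intro mult_mono) auto
    then have "J1 * (1 - eta^2) \<le> J1 * (fst p * fst q)" using c(2) J by (intro mult_left_mono) auto
    then show ?thesis using True False by (simp add: mult.assoc)
  next
    case odd: False
    have "\<bar>- J2 * snd p * snd q\<bar> \<le> J2 * eta * 1" using gp[OF i1(1)] bq J by (intro prod_bd) auto
    then show ?thesis using odd False by auto
  qed
qed

lemma edge2:
  fixes p q :: spin
  assumes J: "0 \<le> J1" "0 \<le> J2" and eta: "0 \<le> eta" "eta \<le> 1" and c: "0 \<le> c" "1 - eta^2 \<le> c * c"
    and i: "i < Suc(2*n)"
    and gp: "1 \<le> i \<Longrightarrow> c \<le> snd p \<and> \<bar>fst p\<bar> \<le> eta"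
    and gq: "i < 2*n \<Longrightarrow> c \<le> snd q \<and> \<bar>fst q\<bar> \<le> eta"
    and bp: "\<bar>snd p\<bar> \<le> 1" and bq: "\<bar>snd q\<bar> \<le> 1"
  shows "(if odd i then - J1 * fst p * fst q else - J2 * snd p * snd q)
    \<le> (if i = 0 \<or> i = 2*n then J2 else if odd i then J1 * eta else - J2 * (1 - eta^2))"
proof (cases "i = 0 \<or> i = 2*n")
  case True
  then have "even i" by auto
  moreover have "\<bar>- J2 * snd p * snd q\<bar> \<le> J2 * 1 * 1" using bp bq J by (intro prod_bd) auto
  ultimately show ?thesis using True by auto
next
  case False
  then have i1: "1 \<le> i" "i < 2*n" using i by auto
  show ?thesis
  proof (cases "odd i")
    case True
    have "\<bar>- J1 * fst p * fst q\<bar> \<le> J1 * eta * 1" using gp[OF i1(1)] gq[OF i1(2)] eta J by (intro prod_bd) auto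
    then show ?thesis using True False by auto
  next
    case odd: False
    have "c * c \<le> snd p * snd q" using gp[OF i1(1)] gq[OF i1(2)] c by (intro mult_mono) auto
    then have "J2 * (1 - eta^2) \<le> J2 * (snd p * snd q)" using c(2) J by (intro mult_left_mono) auto
    then show ?thesis using odd False by (simp add: mult.assoc)
  qed
qed
lemma lin1: "(x1::real) \<le> x2 \<Longrightarrow> 0 \<le> x3 \<Longrightarrow> 16*x4+16*x5 \<le> x6 \<Longrightarrow> 4*x2+4*x7 = x6 \<Longrightarrow> 0 \<le> x4 \<Longrightarrow> 0 \<le> x5
   \<Longrightarrow> 12*x5 + 4*x1 + 4*x7 \<le> 2*x6 + 4*x3" by linarith

lemma lin2: "(x1::real) \<le> x7 \<Longrightarrow> 0 \<le> x3 \<Longrightarrow> 16*x4+16*x5 \<le> x6 \<Longrightarrow> 4*x2+4*x7 = x6 \<Longrightarrow> 0 \<le> x4 \<Longrightarrow> 0 \<le> x5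
   \<Longrightarrow> 16*x5 + 4*x2 + 4*x1 \<le> 2*x6 + 4*x3" by linarith

lemma arith1:
  fixes n J1 J2 D e eta :: real
  assumes "0 \<le> J1" "0 \<le> J2" "1 \<le> n" "0 \<le> eta" "eta \<le> 1" "4*(J1+J2)*eta = D*e"
     "16*(J1+J2) \<le> n*(D*e)"
  shows "2*(4*n^2)*(D*e)/4 \<le> (-J1*(4*n^2) + D*e*(4*n^2) - 4*n*J2) - 4*n*(n*(-J1*(1-eta^2)) + (n-1)*(J2*eta) + 2*J2)"
proof -
  have "eta * eta \<le> eta * 1" using assms by (intro mult_left_mono) auto
  then have e2: "eta*eta \<le> eta" by simp
  have a: "(n*n)*(J1*(eta*eta)) \<le> (n*n)*(J1*eta)" using e2 assms by (intro mult_left_mono) auto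
  have c: "n*(16*(J1+J2)) \<le> n*(n*(D*e))" using assms by (intro mult_left_mono) auto
  have d: "(n*n)*(4*(J1+J2)*eta) = (n*n)*(D*e)" using assms by simp
  have L: "12*(n*J2) + 4*((n*n)*(J1*(eta*eta))) + 4*((n*n)*(J2*eta)) \<le> 2*((n*n)*(D*e)) + 4*(n*(J2*eta))"
    by (rule lin1[OF a, of _ "n*J1"]) (use c d assms in \<open>auto simp: algebra_simps\<close>)
  show ?thesis using L by (simp add: algebra_simps power2_eq_square)
qed

lemma arith2:
  fixes n J1 J2 D e eta :: real
  assumes "0 \<le> J1" "0 \<le> J2" "1 \<le> n" "0 \<le> eta" "eta \<le> 1" "4*(J1+J2)*eta = D*e"
     "16*(J1+J2) \<le> n*(D*e)"
  shows "2*(4*n^2)*(D*e)/4 \<le> (-J2*(4*n^2) + D*e*(4*n^2) - 4*n*J2) - 4*n*(n*(J1*eta) + (n-1)*(-J2*(1-eta^2)) + 2*J2)"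
proof -
  have "eta * eta \<le> eta * 1" using assms by (intro mult_left_mono) auto
  then have e2: "eta*eta \<le> eta" by simp
  have a: "(n*n)*(J2*(eta*eta)) \<le> (n*n)*(J2*eta)" using e2 assms by (intro mult_left_mono) auto
  have c: "n*(16*(J1+J2)) \<le> n*(n*(D*e))" using assms by (intro mult_left_mono) auto
  have d: "(n*n)*(4*(J1+J2)*eta) = (n*n)*(D*e)" using assms by simp
  have L: "16*(n*J2) + 4*((n*n)*(J1*eta)) + 4*((n*n)*(J2*(eta*eta))) \<le> 2*((n*n)*(D*e)) + 4*(n*(J2*(eta*eta)))"
    by (rule lin2[OF a, of _ "n*J1"]) (use c d assms in \<open>auto simp: algebra_simps\<close>)
  show ?thesis using L by (simp add: algebra_simps power2_eq_square)
qed

lemma arith_exp: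
  fixes beta x Lb Ug q eps :: real and N :: nat
  assumes "real N * x \<le> Lb - Ug" "exp (- beta * x) \<le> eps * q" "0 \<le> beta" "0 < q" "eps \<le> 1" "1 \<le> N"
  shows "exp (- beta * Lb) / (exp (- beta * Ug) * q ^ N) \<le> eps"
proof -
  have "exp (- beta * Lb) / (exp (- beta * Ug) * q ^ N) = exp (- beta * (Lb - Ug)) / q ^ N"
  proof -
    have "exp (- beta * Lb) / exp (- beta * Ug) = exp (- beta * (Lb - Ug))"
      by (subst exp_diff[symmetric]) (simp add: algebra_simps)
    then show ?thesis by (simp only: divide_divide_eq_left[symmetric])
  qed
  also have "\<dots> \<le> exp (- beta * (real N * x)) / q ^ N"
    using assms by (intro divide_right_mono) (auto intro: mult_left_mono)
  also have "exp (- beta * (real N * x)) = exp (- beta * x) ^ N"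
    by (simp add: exp_of_nat_mult[symmetric] algebra_simps)
  also have "exp (- beta * x) ^ N / q ^ N = (exp (- beta * x) / q) ^ N"
    by (simp add: power_divide)
  also have "\<dots> \<le> eps ^ N"
    using assms by (intro power_mono) (auto simp: pos_divide_le_eq)
  also have "\<dots> \<le> eps ^ 1"
  proof -
    have "0 < eps * q" using exp_gt_zero[of "- beta * x"] assms(2) by linarith
    then have "0 \<le> eps" using assms(4) by (simp add: zero_less_mult_iff)
    then show ?thesis using assms by (intro power_decreasing) auto
  qed
  finally show ?thesis by simp
qed

lemma beta_choice:
  fixes x a :: real
  assumes "0 < x" "0 < a" "\<bar>ln a\<bar> / x \<le> beta"
  shows "exp (- beta * x) \<le> a"
proof -
  have "\<bar>ln a\<bar> \<le> beta * x" using assms by (simp add: pos_divide_le_eq)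
  then have "- beta * x \<le> ln a" by linarith
  then have "exp (- beta * x) \<le> exp (ln a)" by simp
  then show ?thesis using assms by simp
qed

lemma gibbs_basic:
  assumes "gibbs J1 J2 beta mu"
  shows "prob_space mu" "sets mu = sets Omega" "space mu = UNIV"
  using assms sets_eq_imp_space_eq[of mu Omega] by (auto simp: gibbs_def)

lemma AE_circ_all:
  assumes "gibbs J1 J2 beta mu"
  shows "AE w in mu. \<forall>r. (fst (w r))^2 + (snd (w r))^2 = 1"
  by (subst AE_all_countable) (auto intro: gibbs_circle[OF assms])

lemma shift1_meas: "shift1 \<in> measurable Omega Omega"
  unfolding shift1_def Omega_def
  by (rule measurable_PiM_single') (auto intro!: measurable_component_singleton)

lemma shift2_meas: "shift2 \<in> measurable Omega Omega"
  unfolding shift2_def Omega_def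
  by (rule measurable_PiM_single') (auto intro!: measurable_component_singleton)

lemma TI_eq:
  fixes g :: "spin \<Rightarrow> real"
  assumes TI: "transl_inv mu" and sm: "sets mu = sets Omega" and gm: "g \<in> borel_measurable borel"
  shows "(\<integral>w. g (w (a + 2, b)) \<partial>mu) = (\<integral>w. g (w (a, b)) \<partial>mu)"
    and "(\<integral>w. g (w (a, b + 2)) \<partial>mu) = (\<integral>w. g (w (a, b)) \<partial>mu)"
proof -
  have gO: "(\<lambda>w. g (w (a, b))) \<in> borel_measurable Omega"
    using measurable_compose[OF comp_Omega_meas gm] by simp
  have m1: "shift1 \<in> measurable mu Omega" using shift1_meas sm by (simp cong: measurable_cong_sets)
  have m2: "shift2 \<in> measurable mu Omega" using shift2_meas sm by (simp cong: measurable_cong_sets)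
  have e1: "distr mu Omega shift1 = mu" and e2: "distr mu Omega shift2 = mu"
    using TI by (auto simp: transl_inv_def)
  have "(\<integral>w. g (w (a, b)) \<partial>mu) = (\<integral>w. g (w (a, b)) \<partial>distr mu Omega shift1)" by (simp add: e1)
  also have "\<dots> = (\<integral>w. g (shift1 w (a, b)) \<partial>mu)" by (rule integral_distr[OF m1 gO])
  finally show "(\<integral>w. g (w (a + 2, b)) \<partial>mu) = (\<integral>w. g (w (a, b)) \<partial>mu)" by (simp add: shift1_def)
  have "(\<integral>w. g (w (a, b)) \<partial>mu) = (\<integral>w. g (w (a, b)) \<partial>distr mu Omega shift2)" by (simp add: e2)
  also have "\<dots> = (\<integral>w. g (shift2 w (a, b)) \<partial>mu)" by (rule integral_distr[OF m2 gO])
  finally show "(\<integral>w. g (w (a, b + 2)) \<partial>mu) = (\<integral>w. g (w (a, b)) \<partial>mu)" by (simp add: shift2_def)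
qed

lemma per_int:
  fixes F :: "int \<Rightarrow> real"
  assumes h: "\<And>a. F (a + 2) = F a"
  shows "F (a + 2 * k) = F a"
proof -
  have up: "F (c + 2 * int m) = F c" for c m
  proof (induct m)
    case (Suc m)
    have "F (c + 2 * int (Suc m)) = F ((c + 2 * int m) + 2)" by (simp add: algebra_simps)
    also have "\<dots> = F c" using h Suc by simp
    finally show ?case .
  qed simp
  show ?thesis
  proof (cases "0 \<le> k")
    case True
    then show ?thesis using up[of a "nat k"] by simp
  next
    case False
    define m where "m = nat (- k)"
    have km: "a = a + 2 * k + 2 * int m" using False by (simp add: m_def)
    have eq: "F (a + 2 * k + 2 * int m) = F (a + 2 * k)" by (rule up)
    show ?thesis using eq km by metis
  qed
qed

lemma periodic:
  fixes g :: "spin \<Rightarrow> real"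
  assumes TI: "transl_inv mu" and sm: "sets mu = sets Omega" and gm: "g \<in> borel_measurable borel"
  shows "(\<integral>w. g (w (a + 2 * k, b + 2 * l)) \<partial>mu) = (\<integral>w. g (w (a, b)) \<partial>mu)"
proof -
  have "(\<integral>w. g (w (a + 2 * k, b + 2 * l)) \<partial>mu) = (\<integral>w. g (w (a + 2 * k, b)) \<partial>mu)"
    using per_int[of "\<lambda>y. \<integral>w. g (w (a + 2 * k, y)) \<partial>mu" b l] TI_eq(2)[OF TI sm gm] by simp
  also have "\<dots> = (\<integral>w. g (w (a, b)) \<partial>mu)"
    using per_int[of "\<lambda>x. \<integral>w. g (w (x, b)) \<partial>mu" a k] TI_eq(1)[OF TI sm gm] by simp
  finally show ?thesis .
qed

lemma card_box: "card (box n) = 4 * n^2"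
proof -
  have "card (box n) = card ({..<2*n} \<times> {..<2*n})"
    unfolding box_img by (rule card_image) (auto simp: inj_on_def)
  then show ?thesis by (simp add: power2_eq_square)
qed

lemma dlr_small:
  assumes g: "gibbs J1 J2 beta mu" and Bm: "B \<in> sets Omega" and e: "0 \<le> eps"
    and specb: "\<And>w. (\<forall>r. (fst (w r))^2 + (snd (w r))^2 = 1) \<Longrightarrow> spec J1 J2 beta (box n) B w \<le> eps"
  shows "measure mu B \<le> eps"
proof -
  interpret M: prob_space mu by (rule gibbs_basic(1)[OF g])
  have "emeasure mu B = (\<integral>\<^sup>+ w. ennreal (spec J1 J2 beta (box n) B w) \<partial>mu)"
    using g Bm finite_box unfolding gibbs_def by auto
  also have "\<dots> \<le> (\<integral>\<^sup>+ w. ennreal eps \<partial>mu)"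
  proof (rule nn_integral_mono_AE)
    show "AE w in mu. ennreal (spec J1 J2 beta (box n) B w) \<le> ennreal eps"
      using AE_circ_all[OF g]
    proof eventually_elim
      case (elim w) show ?case using specb[OF elim] by (rule ennreal_leI)
    qed
  qed
  also have "\<dots> = ennreal eps" using M.emeasure_space_1 by simp
  finally show ?thesis using e by (simp add: M.emeasure_eq_measure)
qed

lemma expect_bound:
  fixes m :: "spin \<Rightarrow> real"
  assumes g: "gibbs J1 J2 beta mu" and TI: "transl_inv mu"
    and mm: "m \<in> borel_measurable borel" and mc: "\<And>p. (fst p)^2 + (snd p)^2 = 1 \<Longrightarrow> (m p)^2 \<le> 1"
    and n: "1 \<le> n" and e: "0 \<le> eps"
    and B: "measure mu {w. eps * (4 * real n ^ 2) < (\<Sum>t\<in>box n. (m (w t))^2)} \<le> eps"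
  shows "(\<integral>w. (m (w r))^2 \<partial>mu) \<le> 8 * eps"
proof -
  interpret M: prob_space mu by (rule gibbs_basic(1)[OF g])
  have sm: "sets mu = sets Omega" by (rule gibbs_basic(2)[OF g])
  define N where "N = 4 * real n ^ 2"
  define B where "B = {w. eps * N < (\<Sum>t\<in>box n. (m (w t))^2)}"
  have mO: "(\<lambda>w. (m (w t))^2) \<in> borel_measurable Omega" for t
    using measurable_compose[OF comp_Omega_meas mm] by measurable
  have mmu: "(\<lambda>w. (m (w t))^2) \<in> borel_measurable mu" for t
    using mO sm by (simp cong: measurable_cong_sets)
  have Bm: "B \<in> sets mu"
  proof -
    have "{w \<in> space Omega. eps * N < (\<Sum>t\<in>box n. (m (w t))^2)} \<in> sets Omega"
      using mO by measurable
    then show ?thesis using sm by (simp add: B_def)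
  qed
  have AEb: "AE w in mu. (m (w t))^2 \<le> 1" for t
    using AE_circ_all[OF g]
  proof eventually_elim
    case (elim w) show ?case using mc[of "w t"] elim by blast
  qed
  have int: "integrable mu (\<lambda>w. (m (w t))^2)" for t
    by (rule M.integrable_const_bound[where B=1]) (use AEb[of t] mmu in auto)
  have "(\<Sum>t\<in>box n. \<integral>w. (m (w t))^2 \<partial>mu) = (\<integral>w. (\<Sum>t\<in>box n. (m (w t))^2) \<partial>mu)"
    by (subst Bochner_Integration.integral_sum) (use int in auto)
  also have "\<dots> \<le> (\<integral>w. eps * N + N * indicator B w \<partial>mu)"
  proof (rule integral_mono_AE)
    show "integrable mu (\<lambda>w. \<Sum>t\<in>box n. (m (w t))^2)" by (intro Bochner_Integration.integrable_sum int)
    show "integrable mu (\<lambda>w. eps * N + N * indicator B w)"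
      using Bm by (intro Bochner_Integration.integrable_add integrable_mult_right integrable_real_indicator) 
        (auto simp: less_top[symmetric] M.emeasure_finite)
    show "AE w in mu. (\<Sum>t\<in>box n. (m (w t))^2) \<le> eps * N + N * indicator B w"
      using AE_circ_all[OF g]
    proof eventually_elim
      case (elim w)
      have "(\<Sum>t\<in>box n. (m (w t))^2) \<le> (\<Sum>t\<in>box n. 1)"
      proof (rule sum_mono)
        fix t show "(m (w t))^2 \<le> 1" using mc[of "w t"] elim by blast
      qed
      also have "\<dots> = N" by (simp add: card_box N_def)
      finally have le: "(\<Sum>t\<in>box n. (m (w t))^2) \<le> N" .
      have "0 \<le> eps * N" using e by (simp add: N_def)
      then show ?case using le by (cases "w \<in> B") (auto simp: B_def)
    qed
  qed
  also have "\<dots> = eps * N + N * measure mu B"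
    using Bm by (subst Bochner_Integration.integral_add) (auto simp: less_top[symmetric] M.emeasure_finite M.prob_space
       intro!: integrable_mult_right integrable_real_indicator)
  also have "\<dots> \<le> eps * N + N * eps"
    using B by (intro add_left_mono mult_left_mono) (auto simp: B_def N_def)
  finally have up: "(\<Sum>t\<in>box n. \<integral>w. (m (w t))^2 \<partial>mu) \<le> 2 * eps * N" by (simp add: algebra_simps)
  define x0 where "x0 = fst r mod 2"
  define y0 where "y0 = snd r mod 2"
  define E where "E t = (\<integral>w. (m (w t))^2 \<partial>mu)" for t
  have Ep: "E (x0 + 2 * k, y0 + 2 * l) = E r" for k l
  proof -
    have "E (x0 + 2 * k, y0 + 2 * l) = E (x0, y0)"
      unfolding E_def by (rule periodic[OF TI sm]) (use mm in measurable)
    also have "\<dots> = E (x0 + 2 * (fst r div 2), y0 + 2 * (snd r div 2))"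
      unfolding E_def by (rule periodic[OF TI sm, symmetric]) (use mm in measurable)
    also have "(x0 + 2 * (fst r div 2), y0 + 2 * (snd r div 2)) = r"
      by (simp add: x0_def y0_def prod_eq_iff)
    finally show ?thesis .
  qed
  define S where "S = (\<lambda>(a,b). (x0 + 2 * int a, y0 + 2 * int b)) ` ({..<n} \<times> {..<n})"
  have x0: "0 \<le> x0" "x0 < 2" "0 \<le> y0" "y0 < 2" by (auto simp: x0_def y0_def)
  have Sb: "S \<subseteq> box n" using x0 by (auto simp: S_def box_def)
  have "(\<Sum>t\<in>S. E t) = (\<Sum>p\<in>{..<n} \<times> {..<n}. E ((\<lambda>(a,b). (x0 + 2 * int a, y0 + 2 * int b)) p))"
    unfolding S_def by (subst sum.reindex) (auto simp: inj_on_def comp_def)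
  also have "\<dots> = (\<Sum>p\<in>{..<n} \<times> {..<n}. E r)"
    by (rule sum.cong) (auto simp: Ep)
  also have "\<dots> = real n ^ 2 * E r" by (simp add: power2_eq_square)
  finally have sS: "(\<Sum>t\<in>S. E t) = real n ^ 2 * E r" .
  have "(\<Sum>t\<in>S. E t) \<le> (\<Sum>t\<in>box n. E t)"
    by (rule sum_mono2[OF finite_box Sb]) (auto simp: E_def)
  then have "real n ^ 2 * E r \<le> 2 * eps * N" using up sS by (simp add: E_def)
  then have "real n ^ 2 * E r \<le> real n ^ 2 * (8 * eps)" by (simp add: N_def algebra_simps)
  moreover have "0 < real n ^ 2" using n by simp
  ultimately show ?thesis by (simp add: E_def)
qed

lemma eta_props:
  fixes J1 J2 eps :: real
  assumes "0 < D" "D \<le> J1 + J2" "0 < eps" "eps \<le> 1"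
  shows "0 < D * eps / (4 * (J1 + J2))" "D * eps / (4 * (J1 + J2)) \<le> 1"
    "4 * (J1 + J2) * (D * eps / (4 * (J1 + J2))) = D * eps"
proof -
  have p: "0 < J1 + J2" using assms by linarith
  show "0 < D * eps / (4 * (J1 + J2))" using assms p by simp
  have "D * eps \<le> (J1 + J2) * 1" using assms by (intro mult_mono) auto
  then show "D * eps / (4 * (J1 + J2)) \<le> 1" using p by (simp add: pos_divide_le_eq)
  show "4 * (J1 + J2) * (D * eps / (4 * (J1 + J2))) = D * eps" using p by simp
qed

lemma cos_facts:
  fixes eta :: real
  assumes "0 \<le> eta" "eta \<le> 1"
  shows "0 \<le> cos eta" "1 - eta^2 \<le> cos eta * cos eta"
proof -
  show "0 \<le> cos eta" using assms pi_gt3 by (intro cos_ge_zero) auto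
  have "\<bar>sin eta\<bar> \<le> \<bar>eta\<bar>" by (rule abs_sin_x_le_abs_x)
  then have "(sin eta)^2 \<le> eta^2" by (simp add: abs_le_square_iff)
  moreover have "(sin eta)^2 + (cos eta)^2 = 1" by (rule sin_cos_squared_add)
  ultimately show "1 - eta^2 \<le> cos eta * cos eta" by (simp add: power2_eq_square)
qed

lemma circ_snd: "(fst p)^2 + (snd p)^2 = (1::real) \<Longrightarrow> \<bar>snd p\<bar> \<le> 1"
  using circ_le1 by blast
lemma circ_snd2: "(fst p)^2 + (snd p)^2 = (1::real) \<Longrightarrow> (snd p)^2 \<le> 1"
  using zero_le_power2[of "fst p"] by linarith

lemma spec_case1:
  fixes J1 J2 eps beta :: real and n :: nat
  assumes J: "J2 < J1" "0 < J2" and e: "0 < eps" "eps \<le> 1"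
    and n: "1 \<le> n" "16 * (J1 + J2) \<le> real n * ((J1 - J2) * eps)"
    and b: "0 \<le> beta" "exp (- beta * ((J1 - J2) * eps / 2)) \<le> eps * ((J1 - J2) * eps / (4 * (J1 + J2)) / (2 * pi))"
    and w: "\<forall>r. (fst (w r))^2 + (snd (w r))^2 = 1"
  shows "spec J1 J2 beta (box n) {w. eps * (4 * real n ^ 2) < (\<Sum>t\<in>box n. (snd (w t))^2)} w \<le> eps"
proof -
  have wr: "\<And>r. (fst (w r))^2 + (snd (w r))^2 = 1" using w by blast
  define D where "D = J1 - J2"
  define eta where "eta = D * eps / (4 * (J1 + J2))"
  have D: "0 < D" "D \<le> J1 + J2" using J by (auto simp: D_def)
  note ep = eta_props[OF D e, folded eta_def]
  have J0: "0 \<le> J1" "0 \<le> J2" using J by auto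
  define G where "G = {p::spin. cos eta \<le> fst p \<and> fst p \<le> 1 \<and> \<bar>snd p\<bar> \<le> eta}"
  have Gm: "G \<in> sets borel" unfolding G_def
    by (intro borel_closed closed_Collect_conj closed_Collect_le) (auto intro!: continuous_intros)
  define q where "q = eta / (2 * pi)"
  have q: "0 < q" "q \<le> measure nu G"
    using ep nu_G1[of eta] by (auto simp: q_def G_def)
  note cf = cos_facts[OF less_imp_le[OF ep(1)] ep(2)]
  define Bs where "Bs = {w::config. eps * (4 * real n ^ 2) < (\<Sum>t\<in>box n. (snd (w t))^2)}"
  define Lb where "Lb = - J1 * (4 * real n ^ 2) + D * eps * (4 * real n ^ 2) - 4 * real n * J2"
  define Ug where "Ug = 4 * real n * (real n * (- J1 * (1 - eta^2)) + (real n - 1) * (J2 * eta) + 2 * J2)"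
  have sb: "spec J1 J2 beta (box n) Bs w \<le> exp (- beta * Lb) / (exp (- beta * Ug) * q ^ card (box n))"
  proof (rule spec_bound[OF finite_box b(1) Gm q])
    fix s assume sc: "\<forall>t\<in>box n. (fst (s t))^2 + (snd (s t))^2 = 1" and gl: "glue (box n) s w \<in> Bs"
    let ?v = "glue (box n) s w"
    have ext: "(snd (?v r))^2 \<le> 1" if "r \<notin> box n" for r
      using that circ_snd2[OF wr[of r]] by (simp add: glue_def)
    have hl: "-(\<Sum>r\<in>box n. J1*(fst (?v r))^2 + J2*(snd (?v r))^2) - 4 * real n * J2 \<le> H_Lam J1 J2 (box n) ?v"
      by (rule H_box_lower[OF J0 ext])
    have "(\<Sum>r\<in>box n. J1*(fst (?v r))^2 + J2*(snd (?v r))^2) = (\<Sum>r\<in>box n. J1 - D * (snd (?v r))^2)"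
    proof (rule sum.cong)
      fix r assume r: "r \<in> box n"
      have c1: "(fst (s r))^2 + (snd (s r))^2 = 1" using sc r by blast
      have vr: "?v r = s r" using r by (simp add: glue_def)
      have X: "(fst (?v r))^2 = 1 - (snd (?v r))^2" unfolding vr using c1 by linarith
      show "J1*(fst (?v r))^2 + J2*(snd (?v r))^2 = J1 - D * (snd (?v r))^2"
        by (subst X) (simp add: D_def algebra_simps)
    qed simp
    also have "\<dots> = J1 * (4 * real n ^ 2) - D * (\<Sum>r\<in>box n. (snd (?v r))^2)"
      by (simp add: sum_subtractf sum_distrib_left[symmetric] card_box)
    finally have eq: "(\<Sum>r\<in>box n. J1*(fst (?v r))^2 + J2*(snd (?v r))^2)
        = J1 * (4 * real n ^ 2) - D * (\<Sum>r\<in>box n. (snd (?v r))^2)" .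
    have "D * (eps * (4 * real n ^ 2)) \<le> D * (\<Sum>r\<in>box n. (snd (?v r))^2)"
      using gl D by (intro mult_left_mono) (auto simp: Bs_def)
    then show "Lb \<le> H_Lam J1 J2 (box n) ?v"
      using hl eq by (simp add: Lb_def algebra_simps)
  next
    fix s assume sg: "\<forall>t\<in>box n. s t \<in> G"
    let ?v = "glue (box n) s w"
    have vg: "cos eta \<le> fst (?v t) \<and> \<bar>snd (?v t)\<bar> \<le> eta" if "t \<in> box n" for t
      using sg that by (auto simp: glue_def G_def)
    have vb: "\<bar>snd (?v t)\<bar> \<le> 1" for t
    proof (cases "t \<in> box n")
      case True then show ?thesis using vg[OF True] ep by linarith
    next
      case False then show ?thesis using circ_snd[OF wr[of t]] by (simp add: glue_def)
    qed
    show "H_Lam J1 J2 (box n) ?v \<le> Ug"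
      unfolding Ug_def
    proof (rule H_box_upper[OF n(1)])
      fix i y assume i: "i < Suc (2*n)" and y: "y < 2*n"
      show "hbond J1 J2 ?v (int i - 1, int y) \<le> (if i = 0 \<or> i = 2*n then J2 else if odd i then - J1 * (1 - eta^2) else J2 * eta)"
        unfolding hb_row
        by (rule edge1[OF J0 less_imp_le[OF ep(1)] ep(2) cf i]; (rule vg vb)?; use i y in \<open>auto simp: box_def\<close>)
    next
      fix j x assume j: "j < Suc (2*n)" and x: "x < 2*n"
      show "vbond J1 J2 ?v (int x, int j - 1) \<le> (if j = 0 \<or> j = 2*n then J2 else if odd j then - J1 * (1 - eta^2) else J2 * eta)"
        unfolding vb_row
        by (rule edge1[OF J0 less_imp_le[OF ep(1)] ep(2) cf j]; (rule vg vb)?; use j x in \<open>auto simp: box_def\<close>)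
    qed
  qed
  have "exp (- beta * Lb) / (exp (- beta * Ug) * q ^ card (box n)) \<le> eps"
  proof (rule arith_exp[where x = "D * eps / 2"])
    have "2*(4*real n^2)*(D*eps)/4 \<le> Lb - Ug"
      unfolding Lb_def Ug_def
      by (rule arith1) (use J0 n ep D_def in auto)
    then show "real (card (box n)) * (D * eps / 2) \<le> Lb - Ug" by (simp add: card_box)
    show "exp (- beta * (D * eps / 2)) \<le> eps * q" using b by (simp add: D_def q_def eta_def)
    show "1 \<le> card (box n)" using n by (simp add: card_box)
  qed (use b q e in auto)
  then show ?thesis using sb by (simp add: Bs_def)
qed

lemma spec_case2:
  fixes J1 J2 eps beta :: real and n :: nat
  assumes J: "J1 < J2" "0 < J1" and e: "0 < eps" "eps \<le> 1"
    and n: "1 \<le> n" "16 * (J1 + J2) \<le> real n * ((J2 - J1) * eps)"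
    and b: "0 \<le> beta" "exp (- beta * ((J2 - J1) * eps / 2)) \<le> eps * ((J2 - J1) * eps / (4 * (J1 + J2)) / (2 * pi))"
    and w: "\<forall>r. (fst (w r))^2 + (snd (w r))^2 = 1"
  shows "spec J1 J2 beta (box n) {w. eps * (4 * real n ^ 2) < (\<Sum>t\<in>box n. (fst (w t))^2)} w \<le> eps"
proof -
  have wr: "\<And>r. (fst (w r))^2 + (snd (w r))^2 = 1" using w by blast
  define D where "D = J2 - J1"
  define eta where "eta = D * eps / (4 * (J1 + J2))"
  have D: "0 < D" "D \<le> J1 + J2" using J by (auto simp: D_def)
  note ep = eta_props[OF D e, folded eta_def]
  have J0: "0 \<le> J1" "0 \<le> J2" using J by auto
  define G where "G = {p::spin. cos eta \<le> snd p \<and> snd p \<le> 1 \<and> \<bar>fst p\<bar> \<le> eta}"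
  have Gm: "G \<in> sets borel" unfolding G_def
    by (intro borel_closed closed_Collect_conj closed_Collect_le) (auto intro!: continuous_intros)
  define q where "q = eta / (2 * pi)"
  have q: "0 < q" "q \<le> measure nu G"
    using ep nu_G2[of eta] by (auto simp: q_def G_def)
  note cf = cos_facts[OF less_imp_le[OF ep(1)] ep(2)]
  define Bs where "Bs = {w::config. eps * (4 * real n ^ 2) < (\<Sum>t\<in>box n. (fst (w t))^2)}"
  define Lb where "Lb = - J2 * (4 * real n ^ 2) + D * eps * (4 * real n ^ 2) - 4 * real n * J2"
  define Ug where "Ug = 4 * real n * (real n * (J1 * eta) + (real n - 1) * (- J2 * (1 - eta^2)) + 2 * J2)"
  have sb: "spec J1 J2 beta (box n) Bs w \<le> exp (- beta * Lb) / (exp (- beta * Ug) * q ^ card (box n))"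
  proof (rule spec_bound[OF finite_box b(1) Gm q])
    fix s assume sc: "\<forall>t\<in>box n. (fst (s t))^2 + (snd (s t))^2 = 1" and gl: "glue (box n) s w \<in> Bs"
    let ?v = "glue (box n) s w"
    have ext: "(snd (?v r))^2 \<le> 1" if "r \<notin> box n" for r
      using that circ_snd2[OF wr[of r]] by (simp add: glue_def)
    have hl: "-(\<Sum>r\<in>box n. J1*(fst (?v r))^2 + J2*(snd (?v r))^2) - 4 * real n * J2 \<le> H_Lam J1 J2 (box n) ?v"
      by (rule H_box_lower[OF J0 ext])
    have "(\<Sum>r\<in>box n. J1*(fst (?v r))^2 + J2*(snd (?v r))^2) = (\<Sum>r\<in>box n. J2 - D * (fst (?v r))^2)"
    proof (rule sum.cong)
      fix r assume r: "r \<in> box n"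
      have c1: "(fst (s r))^2 + (snd (s r))^2 = 1" using sc r by blast
      have vr: "?v r = s r" using r by (simp add: glue_def)
      have X: "(snd (?v r))^2 = 1 - (fst (?v r))^2" unfolding vr using c1 by linarith
      show "J1*(fst (?v r))^2 + J2*(snd (?v r))^2 = J2 - D * (fst (?v r))^2"
        by (subst X) (simp add: D_def algebra_simps)
    qed simp
    also have "\<dots> = J2 * (4 * real n ^ 2) - D * (\<Sum>r\<in>box n. (fst (?v r))^2)"
      by (simp add: sum_subtractf sum_distrib_left[symmetric] card_box)
    finally have eq: "(\<Sum>r\<in>box n. J1*(fst (?v r))^2 + J2*(snd (?v r))^2)
        = J2 * (4 * real n ^ 2) - D * (\<Sum>r\<in>box n. (fst (?v r))^2)" .
    have "D * (eps * (4 * real n ^ 2)) \<le> D * (\<Sum>r\<in>box n. (fst (?v r))^2)"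
      using gl D by (intro mult_left_mono) (auto simp: Bs_def)
    then show "Lb \<le> H_Lam J1 J2 (box n) ?v"
      using hl eq by (simp add: Lb_def algebra_simps)
  next
    fix s assume sg: "\<forall>t\<in>box n. s t \<in> G"
    let ?v = "glue (box n) s w"
    have vg: "cos eta \<le> snd (?v t) \<and> \<bar>fst (?v t)\<bar> \<le> eta" if "t \<in> box n" for t
      using sg that by (auto simp: glue_def G_def)
    have vg1: "snd (?v t) \<le> 1" if "t \<in> box n" for t
      using sg that by (auto simp: glue_def G_def)
    have vb: "\<bar>snd (?v t)\<bar> \<le> 1" for t
    proof (cases "t \<in> box n")
      case True then show ?thesis using vg[OF True] vg1[OF True] cf(1) by linarith
    next
      case False then show ?thesis using circ_snd[OF wr[of t]] by (simp add: glue_def)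
    qed
    show "H_Lam J1 J2 (box n) ?v \<le> Ug"
      unfolding Ug_def
    proof (rule H_box_upper[OF n(1)])
      fix i y assume i: "i < Suc (2*n)" and y: "y < 2*n"
      show "hbond J1 J2 ?v (int i - 1, int y) \<le> (if i = 0 \<or> i = 2*n then J2 else if odd i then J1 * eta else - J2 * (1 - eta^2))"
        unfolding hb_row
        by (rule edge2[OF J0 less_imp_le[OF ep(1)] ep(2) cf i]; (rule vg vb)?; use i y in \<open>auto simp: box_def\<close>)
    next
      fix j x assume j: "j < Suc (2*n)" and x: "x < 2*n"
      show "vbond J1 J2 ?v (int x, int j - 1) \<le> (if j = 0 \<or> j = 2*n then J2 else if odd j then J1 * eta else - J2 * (1 - eta^2))"
        unfolding vb_row
        by (rule edge2[OF J0 less_imp_le[OF ep(1)] ep(2) cf j]; (rule vg vb)?; use j x in \<open>auto simp: box_def\<close>)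
    qed
  qed
  have "exp (- beta * Lb) / (exp (- beta * Ug) * q ^ card (box n)) \<le> eps"
  proof (rule arith_exp[where x = "D * eps / 2"])
    have "2*(4*real n^2)*(D*eps)/4 \<le> Lb - Ug"
      unfolding Lb_def Ug_def
      by (rule arith2) (use J0 n ep D_def in auto)
    then show "real (card (box n)) * (D * eps / 2) \<le> Lb - Ug" by (simp add: card_box)
    show "exp (- beta * (D * eps / 2)) \<le> eps * q" using b by (simp add: D_def q_def eta_def)
    show "1 \<le> card (box n)" using n by (simp add: card_box)
  qed (use b q e in auto)
  then show ?thesis using sb by (simp add: Bs_def)
qed


lemma circ_fst2: "(fst p)^2 + (snd p)^2 = (1::real) \<Longrightarrow> (fst p)^2 \<le> 1"
  using zero_le_power2[of "snd p"] by linarith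

lemma compl_bound:
  assumes g: "gibbs J1 J2 beta mu"
  shows "(\<integral>w. (fst (w r))^2 \<partial>mu) = 1 - (\<integral>w. (snd (w r))^2 \<partial>mu)"
proof -
  interpret M: prob_space mu by (rule gibbs_basic(1)[OF g])
  have sm: "sets mu = sets Omega" by (rule gibbs_basic(2)[OF g])
  have m1: "(\<lambda>w. (fst (w r))^2) \<in> borel_measurable mu" using sm by (simp cong: measurable_cong_sets)
  have m2: "(\<lambda>w. (snd (w r))^2) \<in> borel_measurable mu" using sm by (simp cong: measurable_cong_sets)
  have AEc: "AE w in mu. (fst (w r))^2 + (snd (w r))^2 = 1"
    by (rule gibbs_circle[OF g])
  have i2: "integrable mu (\<lambda>w. (snd (w r))^2)"
  proof (rule M.integrable_const_bound[where B=1])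
    show "AE w in mu. norm ((snd (w r))^2) \<le> 1" using AEc
    proof eventually_elim
      case (elim w) show ?case using circ_snd2[OF elim] by simp
    qed
  qed (rule m2)
  have "(\<integral>w. (fst (w r))^2 \<partial>mu) = (\<integral>w. 1 - (snd (w r))^2 \<partial>mu)"
    by (rule integral_cong_AE) (use m1 m2 AEc in \<open>auto elim: eventually_mono\<close>)
  also have "\<dots> = (\<integral>w. 1 \<partial>mu) - (\<integral>w. (snd (w r))^2 \<partial>mu)"
    by (rule Bochner_Integration.integral_diff) (auto simp: i2)
  also have "\<dots> = 1 - (\<integral>w. (snd (w r))^2 \<partial>mu)" by (simp add: M.prob_space)
  finally show ?thesis .
qed

lemma n_choice:
  fixes x :: real
  assumes "0 < x"
  shows "1 \<le> nat \<lceil>K / x\<rceil> + 1" "K \<le> real (nat \<lceil>K / x\<rceil> + 1) * x"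
proof -
  show "1 \<le> nat \<lceil>K / x\<rceil> + 1" by simp
  have "K / x \<le> real (nat \<lceil>K / x\<rceil> + 1)" using real_nat_ceiling_ge[of "K / x"] by simp
  then show "K \<le> real (nat \<lceil>K / x\<rceil> + 1) * x" using assms by (simp add: pos_divide_le_eq)
qed

theorem theorem2p4:
  fixes J1 J2 \<delta> :: real
  assumes "\<delta> > 0"
  shows "(J1 > J2 \<and> J2 > 0 \<longrightarrow>
           (\<exists>beta0. \<forall>beta\<ge>beta0. \<forall>mu. gibbs J1 J2 beta mu \<and> transl_inv mu \<and> ergodic mu \<longrightarrow>
              (\<forall>r. (\<integral>w. (fst (w r))\<^sup>2 \<partial>mu) \<ge> 1 - \<delta>)))
       \<and> (J2 > J1 \<and> J1 > 0 \<longrightarrow>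
           (\<exists>beta0. \<forall>beta\<ge>beta0. \<forall>mu. gibbs J1 J2 beta mu \<and> transl_inv mu \<and> ergodic mu \<longrightarrow>
              (\<forall>r. (\<integral>w. (snd (w r))\<^sup>2 \<partial>mu) \<ge> 1 - \<delta>)))"
proof -
  define eps where "eps = min \<delta> 1 / 8"
  have e: "0 < eps" "eps \<le> 1" "8 * eps \<le> \<delta>" using assms by (auto simp: eps_def)
  have c1: "J1 > J2 \<and> J2 > 0 \<longrightarrow>
           (\<exists>beta0. \<forall>beta\<ge>beta0. \<forall>mu. gibbs J1 J2 beta mu \<and> transl_inv mu \<and> ergodic mu \<longrightarrow>
              (\<forall>r. (\<integral>w. (fst (w r))\<^sup>2 \<partial>mu) \<ge> 1 - \<delta>))"
  proof
    assume J: "J1 > J2 \<and> J2 > 0"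
    define D where "D = J1 - J2"
    have D: "0 < D" using J by (simp add: D_def)
    define n where "n = nat \<lceil>16 * (J1 + J2) / (D * eps)\<rceil> + 1"
    have n: "1 \<le> n" "16 * (J1 + J2) \<le> real n * (D * eps)"
      using n_choice[of "D * eps" "16 * (J1 + J2)"] D e by (auto simp: n_def)
    define a where "a = eps * (D * eps / (4 * (J1 + J2)) / (2 * pi))"
    have a: "0 < a" using D e J by (simp add: a_def)
    define x where "x = D * eps / 2"
    have x: "0 < x" using D e by (simp add: x_def)
    show "\<exists>beta0. \<forall>beta\<ge>beta0. \<forall>mu. gibbs J1 J2 beta mu \<and> transl_inv mu \<and> ergodic mu \<longrightarrow>
              (\<forall>r. (\<integral>w. (fst (w r))\<^sup>2 \<partial>mu) \<ge> 1 - \<delta>)"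
    proof (intro exI allI impI)
      fix beta mu r assume b: "\<bar>ln a\<bar> / x \<le> beta" and h: "gibbs J1 J2 beta mu \<and> transl_inv mu \<and> ergodic mu"
      have g: "gibbs J1 J2 beta mu" and TI: "transl_inv mu" using h by auto
      have b0: "0 \<le> beta" using b x by (meson abs_ge_zero divide_nonneg_pos order.trans)
      have be: "exp (- beta * x) \<le> a" by (rule beta_choice[OF x a b])
      define B where "B = {w::config. eps * (4 * real n ^ 2) < (\<Sum>t\<in>box n. (snd (w t))^2)}"
      have Bm: "B \<in> sets Omega"
      proof -
        have "{w \<in> space Omega. eps * (4 * real n ^ 2) < (\<Sum>t\<in>box n. (snd (w t))^2)} \<in> sets Omega"
          by measurable
        then show ?thesis by (simp add: B_def)
      qed
      have "measure mu B \<le> eps"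
      proof (rule dlr_small[OF g Bm less_imp_le[OF e(1)]])
        fix w :: config assume w: "\<forall>r. (fst (w r))^2 + (snd (w r))^2 = 1"
        show "spec J1 J2 beta (box n) B w \<le> eps"
          unfolding B_def
          by (rule spec_case1) (use J e n b0 be w in \<open>auto simp: D_def x_def a_def\<close>)
      qed
      then have "(\<integral>w. (snd (w r))^2 \<partial>mu) \<le> 8 * eps"
        by (intro expect_bound[OF g TI _ _ n(1) less_imp_le[OF e(1)]])
           (auto simp: B_def intro: circ_snd2)
      then show "(\<integral>w. (fst (w r))\<^sup>2 \<partial>mu) \<ge> 1 - \<delta>"
        using compl_bound[OF g, of r] e by linarith
    qed
  qed
  have c2: "J2 > J1 \<and> J1 > 0 \<longrightarrow>
           (\<exists>beta0. \<forall>beta\<ge>beta0. \<forall>mu. gibbs J1 J2 beta mu \<and> transl_inv mu \<and> ergodic mu \<longrightarrow>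
              (\<forall>r. (\<integral>w. (snd (w r))\<^sup>2 \<partial>mu) \<ge> 1 - \<delta>))"
  proof
    assume J: "J2 > J1 \<and> J1 > 0"
    define D where "D = J2 - J1"
    have D: "0 < D" using J by (simp add: D_def)
    define n where "n = nat \<lceil>16 * (J1 + J2) / (D * eps)\<rceil> + 1"
    have n: "1 \<le> n" "16 * (J1 + J2) \<le> real n * (D * eps)"
      using n_choice[of "D * eps" "16 * (J1 + J2)"] D e by (auto simp: n_def)
    define a where "a = eps * (D * eps / (4 * (J1 + J2)) / (2 * pi))"
    have a: "0 < a" using D e J by (simp add: a_def)
    define x where "x = D * eps / 2"
    have x: "0 < x" using D e by (simp add: x_def)
    show "\<exists>beta0. \<forall>beta\<ge>beta0. \<forall>mu. gibbs J1 J2 beta mu \<and> transl_inv mu \<and> ergodic mu \<longrightarrow>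
              (\<forall>r. (\<integral>w. (snd (w r))\<^sup>2 \<partial>mu) \<ge> 1 - \<delta>)"
    proof (intro exI allI impI)
      fix beta mu r assume b: "\<bar>ln a\<bar> / x \<le> beta" and h: "gibbs J1 J2 beta mu \<and> transl_inv mu \<and> ergodic mu"
      have g: "gibbs J1 J2 beta mu" and TI: "transl_inv mu" using h by auto
      have b0: "0 \<le> beta" using b x by (meson abs_ge_zero divide_nonneg_pos order.trans)
      have be: "exp (- beta * x) \<le> a" by (rule beta_choice[OF x a b])
      define B where "B = {w::config. eps * (4 * real n ^ 2) < (\<Sum>t\<in>box n. (fst (w t))^2)}"
      have Bm: "B \<in> sets Omega"
      proof -
        have "{w \<in> space Omega. eps * (4 * real n ^ 2) < (\<Sum>t\<in>box n. (fst (w t))^2)} \<in> sets Omega"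
          by measurable
        then show ?thesis by (simp add: B_def)
      qed
      have "measure mu B \<le> eps"
      proof (rule dlr_small[OF g Bm less_imp_le[OF e(1)]])
        fix w :: config assume w: "\<forall>r. (fst (w r))^2 + (snd (w r))^2 = 1"
        show "spec J1 J2 beta (box n) B w \<le> eps"
          unfolding B_def
          by (rule spec_case2) (use J e n b0 be w in \<open>auto simp: D_def x_def a_def\<close>)
      qed
      then have "(\<integral>w. (fst (w r))^2 \<partial>mu) \<le> 8 * eps"
        by (intro expect_bound[OF g TI _ _ n(1) less_imp_le[OF e(1)]])
           (auto simp: B_def intro: circ_fst2)
      then show "(\<integral>w. (snd (w r))\<^sup>2 \<partial>mu) \<ge> 1 - \<delta>"
        using compl_bound[OF g, of r] e by linarith
    qed
  qed
  show ?thesis using c1 c2 by blast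
qed

end
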